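(* Let $R$ be a Noetherian ring and let $N \subsetneq M$ be finitely generated $R$-modules with $\operatorname{Ass}(M/N)=\{P_1,P_2,\dots,P_s\}$ (the $P_i$ distinct). Suppose that for each $i=1,2,\dots,s$, $Q_i$ is a $P_i$-primary component of $N$ in $M$, i.e. $Q_i\in\Lambda_{P_i}(N\subsetneq M)$. Then $N=Q_1\cap Q_2\cap\cdots\cap Q_s$, and this is an irredundant and minimal primary decomposition of $N$ in $M$.
   Context: A submodule $Q\subseteq M$ is $P$-primary if $\operatorname{Ass}(M/Q)=\{P\}$. A primary decomposition of $N$ in $M$ means an irredundant and minimal primary decomposition $N=Q_1\cap\cdots\cap Q_s$ with $Q_i$ being $P_i$-primary, the $P_i$ distinct; then $\operatorname{Ass}(M/N)=\{P_1,\dots,P_s\}$ and $Q_i$ is called a $P_i$-primary component of $N$ in $M$. For $P\in\operatorname{Ass}(M/N)$, $\Lambda_P(N\subsetneq M)$ denotes the set of all $P$-primary submodules $Q$ of $M$ that occur as the $P$-primary component in some (irredundant, minimal) primary decomposition of $N$ in $M$. *)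

theory Defs
  imports Complex_Main
begin

text \<open>Modules M, N are submodules
  (sets) of an ambient module type 'm.  Ideals of 'r are the submodules of 'r
  regarded as a module over itself.\<close>

definition noetherian_ring :: "'r::comm_ring_1 itself \<Rightarrow> bool" where
  "noetherian_ring _ \<longleftrightarrow>
     (\<forall>I :: 'r set. module.subspace ((*) :: 'r \<Rightarrow> 'r \<Rightarrow> 'r) I \<longrightarrow>
        (\<exists>F. finite F \<and> module.span ((*) :: 'r \<Rightarrow> 'r \<Rightarrow> 'r) F = I))"

definition prime_ideal :: "'r::comm_ring_1 set \<Rightarrow> bool" where
  "prime_ideal P \<longleftrightarrow> module.subspace ((*) :: 'r \<Rightarrow> 'r \<Rightarrow> 'r) P \<and> P \<noteq> UNIV \<and>
     (\<forall>a b. a * b \<in> P \<longrightarrow> a \<in> P \<or> b \<in> P)"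

definition fin_gen_submodule :: "('r::comm_ring_1 \<Rightarrow> 'm::ab_group_add \<Rightarrow> 'm) \<Rightarrow> 'm set \<Rightarrow> bool" where
  "fin_gen_submodule scale M \<longleftrightarrow> module.subspace scale M \<and>
     (\<exists>F. finite F \<and> F \<subseteq> M \<and> module.span scale F = M)"

text \<open>Ass(M/N): primes that are annihilators of some element x + N of M/N,
  i.e. P = (N :_R x) = {r. r x \<in> N} for some x \<in> M.\<close>
definition Ass :: "('r::comm_ring_1 \<Rightarrow> 'm::ab_group_add \<Rightarrow> 'm) \<Rightarrow> 'm set \<Rightarrow> 'm set \<Rightarrow> 'r set set" where
  "Ass scale M N = {P. prime_ideal P \<and> (\<exists>x\<in>M. P = {r. scale r x \<in> N})}"

definition primary_submodule ::
  "('r::comm_ring_1 \<Rightarrow> 'm::ab_group_add \<Rightarrow> 'm) \<Rightarrow> 'm set \<Rightarrow> 'm set \<Rightarrow> 'r set \<Rightarrow> bool" where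
  "primary_submodule scale M Q P \<longleftrightarrow>
     module.subspace scale Q \<and> Q \<subseteq> M \<and> Ass scale M Q = {P}"

definition primary_decomposition ::
  "('r::comm_ring_1 \<Rightarrow> 'm::ab_group_add \<Rightarrow> 'm) \<Rightarrow> 'm set \<Rightarrow> 'm set \<Rightarrow> nat \<Rightarrow>
   (nat \<Rightarrow> 'm set) \<Rightarrow> (nat \<Rightarrow> 'r set) \<Rightarrow> bool" where
  "primary_decomposition scale M N s Q P \<longleftrightarrow>
     (\<forall>i\<in>{1..s}. primary_submodule scale M (Q i) (P i)) \<and>
     inj_on P {1..s} \<and>
     N = (\<Inter>i\<in>{1..s}. Q i) \<and>
     (\<forall>i\<in>{1..s}. M \<inter> (\<Inter>j\<in>{1..s} - {i}. Q j) \<noteq> N)"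

definition Lambda ::
  "('r::comm_ring_1 \<Rightarrow> 'm::ab_group_add \<Rightarrow> 'm) \<Rightarrow> 'r set \<Rightarrow> 'm set \<Rightarrow> 'm set \<Rightarrow> 'm set set" where
  "Lambda scale P N M = {Q'. \<exists>s Q P' i. primary_decomposition scale M N s Q P' \<and>
       i \<in> {1..s} \<and> P' i = P \<and> Q i = Q' \<and> primary_submodule scale M Q' P}"

end

theory Submission
  imports Defs
begin

lemma ring_module: "module ((*) :: 'r::comm_ring_1 \<Rightarrow> 'r \<Rightarrow> 'r)"
  by unfold_locales (auto simp: algebra_simps)

lemma prod_in_prime:
  fixes P :: "'r::comm_ring_1 set"
  assumes "finite A" "1 \<notin> P" "\<forall>a b. a * b \<in> P \<longrightarrow> a \<in> P \<or> b \<in> P"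
  shows "prod f A \<in> P \<Longrightarrow> \<exists>j\<in>A. f j \<in> P"
  using assms(1)
proof (induction A rule: finite_induct)
  case empty then show ?case using assms(2) by simp
next
  case (insert a A)
  then have "f a * prod f A \<in> P" by simp
  then show ?case using assms(3) insert by blast
qed

lemma prime_one_notin:
  fixes P :: "'r::comm_ring_1 set"
  assumes "prime_ideal P" shows "1 \<notin> P"
proof
  assume h: "1 \<in> P"
  have "module.subspace ((*) :: 'r \<Rightarrow> 'r \<Rightarrow> 'r) P" "P \<noteq> UNIV"
    using assms by (auto simp: prime_ideal_def)
  moreover have "\<forall>r. r \<in> P"
    using calculation(1) h unfolding module.subspace_def[OF ring_module] by (metis mult_1_right)
  ultimately show False by auto
qed

lemma key:
  fixes scale :: "'r::comm_ring_1 \<Rightarrow> 'm::ab_group_add \<Rightarrow> 'm"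
  assumes md: "module scale" and fin: "finite A" and x: "x \<in> M"
    and pr: "prime_ideal P"
    and Pe: "P = {r. \<forall>j\<in>A. scale r x \<in> Q j}"
    and Qs: "\<forall>j\<in>A. module.subspace scale (Q j) \<and> Ass scale M (Q j) = {PP j}"
  shows "\<exists>j\<in>A. x \<notin> Q j \<and> P = PP j"
proof -
  have one: "1 \<notin> P" using prime_one_notin[OF pr] .
  have primeP: "\<forall>a b. a * b \<in> P \<longrightarrow> a \<in> P \<or> b \<in> P" using pr by (simp add: prime_ideal_def)
  have "\<exists>j\<in>A. {r. scale r x \<in> Q j} \<subseteq> P"
  proof (rule ccontr)
    assume "\<not> ?thesis"
    then have "\<forall>j\<in>A. \<exists>a. scale a x \<in> Q j \<and> a \<notin> P" by blast
    then obtain f where f: "\<forall>j\<in>A. scale (f j) x \<in> Q j \<and> f j \<notin> P" by metis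
    have "\<forall>j\<in>A. scale (prod f A) x \<in> Q j"
    proof
      fix j assume j: "j \<in> A"
      have "prod f A = prod f (A - {j}) * f j"
        using prod.remove[OF fin j, of f] by (simp add: mult.commute)
      then have "scale (prod f A) x = scale (prod f (A - {j})) (scale (f j) x)"
        using module.scale_scale[OF md] by metis
      then show "scale (prod f A) x \<in> Q j"
        using f j Qs module.subspace_scale[OF md] by metis
    qed
    then have "prod f A \<in> P" using Pe by blast
    then obtain j where "j \<in> A" "f j \<in> P" using prod_in_prime[OF fin one primeP] by blast
    then show False using f by blast
  qed
  then obtain j where j: "j \<in> A" "{r. scale r x \<in> Q j} \<subseteq> P" by blast
  have eq: "P = {r. scale r x \<in> Q j}" using j Pe by blast
  then have "P \<in> Ass scale M (Q j)" using pr x by (auto simp: Ass_def)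
  then have "P = PP j" using Qs j by auto
  moreover have "x \<notin> Q j" using one eq module.scale_one[OF md] by auto
  ultimately show ?thesis using j by blast
qed

lemma chain_finite_bound:
  assumes "finite F" "C \<noteq> {}" "\<forall>X\<in>C. \<forall>Y\<in>C. X \<subseteq> Y \<or> Y \<subseteq> X" "F \<subseteq> \<Union>C"
  shows "\<exists>X\<in>C. F \<subseteq> X"
  using assms(1,4)
proof (induction F rule: finite_induct)
  case empty then show ?case using assms(2) by blast
next
  case (insert a F)
  then obtain X where X: "X \<in> C" "F \<subseteq> X" by auto
  obtain Y where Y: "Y \<in> C" "a \<in> Y" using insert by auto
  show ?case using assms(3) X Y by (metis insert_subset subset_trans)
qed

theorem theorem1p1:
  fixes scale :: "'r::comm_ring_1 \<Rightarrow> 'm::ab_group_add \<Rightarrow> 'm"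
    and M N :: "'m set" and s :: nat
    and P :: "nat \<Rightarrow> 'r set" and Q :: "nat \<Rightarrow> 'm set"
  assumes "module scale"
    and "noetherian_ring TYPE('r)"
    and "fin_gen_submodule scale M"
    and "fin_gen_submodule scale N"
    and "N \<subset> M"
    and "Ass scale M N = P ` {1..s}"
    and "inj_on P {1..s}"
    and "\<forall>i\<in>{1..s}. Q i \<in> Lambda scale (P i) N M"
  shows "N = (\<Inter>i\<in>{1..s}. Q i) \<and> primary_decomposition scale M N s Q P"
proof -
  note md = assms(1)
  have subM: "module.subspace scale M" using assms(3) by (simp add: fin_gen_submodule_def)
  have subN: "module.subspace scale N" using assms(4) by (simp add: fin_gen_submodule_def)
  have RM: "module ((*) :: 'r \<Rightarrow> 'r \<Rightarrow> 'r)" by (rule ring_module)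
  have dec: "\<exists>s' Q' P' i'. primary_decomposition scale M N s' Q' P' \<and> i' \<in> {1..s'} \<and>
      P' i' = P i \<and> Q' i' = Q i \<and> primary_submodule scale M (Q i) (P i)" if "i \<in> {1..s}" for i
    using assms(8) that by (auto simp: Lambda_def)
  have prim: "primary_submodule scale M (Q i) (P i)" if "i \<in> {1..s}" for i
    using dec[OF that] by blast
  have NQ: "N \<subseteq> Q i" if ii: "i \<in> {1..s}" for i
  proof -
    obtain s' Q' P' i' where "primary_decomposition scale M N s' Q' P'" "i' \<in> {1..s'}" "Q' i' = Q i"
      using dec[OF ii] by blast
    then show ?thesis by (auto simp: primary_decomposition_def)
  qed
  define L where "L = (\<Inter>i\<in>{1..s}. Q i)"
  have subL: "module.subspace scale L"
    unfolding L_def using prim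
    by (intro module.subspace_Int[OF md]) (auto simp: primary_submodule_def)
  have MLN: "M \<inter> L \<subseteq> N"
  proof (rule ccontr)
    assume "\<not> ?thesis"
    then obtain y0 where y0: "y0 \<in> M \<inter> L - N" by blast
    define Fam where "Fam = {{r. scale r y \<in> N} | y. y \<in> M \<inter> L - N}"
    have famsub: "module.subspace ((*) :: 'r \<Rightarrow> 'r \<Rightarrow> 'r) X" if XF: "X \<in> Fam" for X
    proof -
      obtain y where X: "X = {r. scale r y \<in> N}" using XF Fam_def by blast
      show ?thesis unfolding X module.subspace_def[OF RM]
        using module.subspace_0[OF md subN] module.subspace_add[OF md subN]
          module.subspace_scale[OF md subN]
        by (auto simp: module.scale_left_distrib[OF md] module.scale_scale[OF md, symmetric]
            module.scale_zero_left[OF md])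
    qed
    have "\<exists>X\<in>Fam. \<forall>Y\<in>Fam. X \<subseteq> Y \<longrightarrow> Y = X"
    proof (rule subset_Zorn)
      fix C assume ch: "subset.chain Fam C"
      then have CF: "C \<subseteq> Fam" and cmp: "\<forall>X\<in>C. \<forall>Y\<in>C. X \<subseteq> Y \<or> Y \<subseteq> X"
        by (auto simp: subset_chain_def)
      show "\<exists>U\<in>Fam. \<forall>X\<in>C. X \<subseteq> U"
      proof (cases "C = {}")
        case True then show ?thesis using y0 Fam_def by blast
      next
        case False
        have "module.subspace ((*) :: 'r \<Rightarrow> 'r \<Rightarrow> 'r) (\<Union>C)"
          unfolding module.subspace_def[OF RM]
        proof (intro conjI ballI allI)
          show "0 \<in> \<Union>C" using False CF famsub module.subspace_0[OF RM] by blast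
        next
          fix a b assume "a \<in> \<Union>C" "b \<in> \<Union>C"
          then obtain X Y where "X \<in> C" "Y \<in> C" "a \<in> X" "b \<in> Y" by blast
          then show "a + b \<in> \<Union>C" using cmp CF famsub module.subspace_add[OF RM]
            by (metis UnionI subsetD)
        next
          fix c a assume "a \<in> \<Union>C"
          then show "c * a \<in> \<Union>C" using CF famsub module.subspace_scale[OF RM] by blast
        qed
        then obtain F where F: "finite F" "module.span ((*) :: 'r \<Rightarrow> 'r \<Rightarrow> 'r) F = \<Union>C"
          using assms(2) by (auto simp: noetherian_ring_def)
        then have "F \<subseteq> \<Union>C" using module.span_superset[OF RM, of F] by simp
        then obtain X where X: "X \<in> C" "F \<subseteq> X" using chain_finite_bound[OF F(1) False cmp] by blast
        then have "\<Union>C \<subseteq> X" using F module.span_minimal[OF RM X(2)] famsub CF by blast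
        then show ?thesis using X CF by blast
      qed
    qed
    then obtain I0 where I0: "I0 \<in> Fam" "\<forall>Y\<in>Fam. I0 \<subseteq> Y \<longrightarrow> Y = I0" by blast
    then obtain y where y: "y \<in> M \<inter> L - N" "I0 = {r. scale r y \<in> N}" using Fam_def by blast
    have "prime_ideal I0"
      unfolding prime_ideal_def
    proof (intro conjI allI impI)
      show "module.subspace ((*) :: 'r \<Rightarrow> 'r \<Rightarrow> 'r) I0" using famsub I0 by blast
      have "1 \<notin> I0" using y module.scale_one[OF md] by auto
      then show "I0 \<noteq> UNIV" by blast
    next
      fix a b assume ab: "a * b \<in> I0"
      show "a \<in> I0 \<or> b \<in> I0"
      proof (cases "a \<in> I0")
        case True then show ?thesis by blast
      next
        case na: False
        define z where "z = scale a y"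
        have "z \<in> M" using y module.subspace_scale[OF md subM] z_def by blast
        moreover have "z \<in> L" using y module.subspace_scale[OF md subL] z_def by blast
        moreover have "z \<notin> N" using na y z_def by blast
        ultimately have zf: "{r. scale r z \<in> N} \<in> Fam" using Fam_def by blast
        have "I0 \<subseteq> {r. scale r z \<in> N}"
        proof
          fix r assume "r \<in> I0"
          then have "scale a (scale r y) \<in> N" using y module.subspace_scale[OF md subN] by blast
          then show "r \<in> {r. scale r z \<in> N}" unfolding z_def
            using module.scale_scale[OF md] by (simp add: mult.commute)
        qed
        then have "{r. scale r z \<in> N} = I0" using I0 zf by blast
        moreover have "scale b z \<in> N" using ab y unfolding z_def
          using module.scale_scale[OF md] by (simp add: mult.commute)
        ultimately show ?thesis by blast
      qed
    qed
    then have "I0 \<in> Ass scale M N" using y by (auto simp: Ass_def)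
    then obtain k where k: "k \<in> {1..s}" "I0 = P k" using assms(6) by blast
    obtain s' Q' P' k' where D: "primary_decomposition scale M N s' Q' P'" "k' \<in> {1..s'}"
      "P' k' = P k" "Q' k' = Q k"
      using dec[OF k(1)] by blast
    have "I0 = {r. \<forall>j\<in>{1..s'}. scale r y \<in> Q' j}"
      using y D(1) by (auto simp: primary_decomposition_def)
    moreover have "\<forall>j\<in>{1..s'}. module.subspace scale (Q' j) \<and> Ass scale M (Q' j) = {P' j}"
      using D(1) by (auto simp: primary_decomposition_def primary_submodule_def)
    ultimately obtain j where j: "j \<in> {1..s'}" "y \<notin> Q' j" "I0 = P' j"
      using key[OF md _ _ \<open>prime_ideal I0\<close>, of "{1..s'}" y M Q' P'] y by blast
    have "y \<in> Q' k'" using D(4) y k(1) L_def by auto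
    then have "j \<noteq> k'" using j by blast
    moreover have "P' j = P' k'" using j k D by simp
    moreover have "inj_on P' {1..s'}" using D(1) by (simp add: primary_decomposition_def)
    ultimately show False using j D(2) by (meson inj_onD)
  qed
  have NL: "N = L"
  proof (cases "s = 0")
    case True
    then have "M \<subseteq> N" using MLN L_def by auto
    then show ?thesis using assms(5) by blast
  next
    case False
    then have "L \<subseteq> M" using prim[of 1] L_def by (auto simp: primary_submodule_def)
    then show ?thesis using MLN NQ L_def by blast
  qed
  have irr: "M \<inter> (\<Inter>j\<in>{1..s} - {i}. Q j) \<noteq> N" if i: "i \<in> {1..s}" for i
  proof
    assume eqN: "M \<inter> (\<Inter>j\<in>{1..s} - {i}. Q j) = N"
    have "P i \<in> Ass scale M N" using assms(6) i by blast
    then obtain x where x: "x \<in> M" "P i = {r. scale r x \<in> N}" "prime_ideal (P i)"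
      by (auto simp: Ass_def)
    have "P i = {r. \<forall>j\<in>{1..s} - {i}. scale r x \<in> Q j}"
      using x eqN module.subspace_scale[OF md subM] by blast
    moreover have "\<forall>j\<in>{1..s} - {i}. module.subspace scale (Q j) \<and> Ass scale M (Q j) = {P j}"
      using prim by (auto simp: primary_submodule_def)
    ultimately obtain j where j: "j \<in> {1..s} - {i}" "P i = P j"
      using key[OF md _ x(1) x(3), of "{1..s} - {i}" Q P] by blast
    then show False using assms(7) i by (metis DiffD1 DiffD2 inj_onD singletonI)
  qed
  show ?thesis
    using NL L_def prim assms(7) irr by (auto simp: primary_decomposition_def)
qed

end
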